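(* Let $c\in(0,1)$ and let $f:[0,1]\to[0,1]$ be a piecewise contracting map with contraction pieces $X_1=[0,c)$ and $X_2=(c,1]$, whose continuous extensions $f_1:[0,c]\to[0,1]$ and $f_2:[c,1]\to[0,1]$ are increasing and satisfy $0=f_2(c)<f_2(1)<f_1(0)<f_1(c)=1$. For $k\in\mathbb{N}$ let $H_k:=f^k\big((f(1),f(0))\big)$. If $c\notin\overline{H_k}$ for all $k\in\mathbb{N}$, then $H_k=(f^{k+1}(1),f^{k+1}(0))$ for all $k\in\mathbb{N}$, \[ \Lambda_n=[0,1]\setminus\bigcup_{k=0}^{n-1}H_k\qquad\forall\, n\geqslant 1, \] $\{0,1\}\subset\widetilde X$, and for every $n\geqslant 1$ and every $A\in\mathcal{A}_n$ there exist $p,q\in\mathbb{N}$ with $A=[f^p(0),f^q(1)]$.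
   Context: Piecewise contracting: $f$ is discontinuous at $c$ and there is $\lambda\in(0,1)$ with $|f(x)-f(y)|\leqslant\lambda|x-y|$ for $x,y$ both in $[0,c)$ or both in $(c,1]$. $\Delta=\{c\}$ and $\widetilde X:=\bigcap_{n\geqslant0}f^{-n}([0,1]\setminus\{c\})$. Atoms: $F_i(A):=\overline{f(A\cap X_i)}$ for $i=1,2$, and $A_{i_1\dots i_n}:=F_{i_n}\circ\dots\circ F_{i_1}([0,1])$ is an atom of generation $n$ if non-empty; $\mathcal{A}_n$ is the set of atoms of generation $n$ and $\Lambda_n:=\bigcup_{A\in\mathcal{A}_n}A$. $f^k(S)$ denotes the image of a set $S$ under $f^k$; $\mathbb{N}=\{0,1,\dots\}$. *)

theory Defs
  imports "HOL-Analysis.Analysis"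
begin

definition piece :: "real \<Rightarrow> nat \<Rightarrow> real set" where
  "piece c i = (if i = 1 then {0..<c} else {c<..1})"

definition atomF :: "(real \<Rightarrow> real) \<Rightarrow> real \<Rightarrow> nat \<Rightarrow> real set \<Rightarrow> real set" where
  "atomF f c i A = closure (f ` (A \<inter> piece c i))"

text \<open>A_{i_1...i_n} = F_{i_n} o ... o F_{i_1} ([0,1]); the word is applied left to right.\<close>
definition atom_word :: "(real \<Rightarrow> real) \<Rightarrow> real \<Rightarrow> nat list \<Rightarrow> real set" where
  "atom_word f c ws = fold (atomF f c) ws {0..1}"

definition atoms :: "(real \<Rightarrow> real) \<Rightarrow> real \<Rightarrow> nat \<Rightarrow> real set set" where
  "atoms f c n = {A. \<exists>ws. length ws = n \<and> set ws \<subseteq> {1,2} \<and> A = atom_word f c ws \<and> A \<noteq> {}}"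

definition Lambda :: "(real \<Rightarrow> real) \<Rightarrow> real \<Rightarrow> nat \<Rightarrow> real set" where
  "Lambda f c n = \<Union> (atoms f c n)"

definition Xtilde :: "(real \<Rightarrow> real) \<Rightarrow> real \<Rightarrow> real set" where
  "Xtilde f c = (\<Inter>n. {x \<in> {0..1}. (f ^^ n) x \<in> {0..1} - {c}})"

end

theory Submission
  imports Defs
begin


lemma cm_img:
  fixes g :: "real \<Rightarrow> real"
  assumes cont: "continuous_on {s..t} g" and sm: "strict_mono_on {s..t} g"
    and uv: "s \<le> u" "u \<le> v" "v \<le> t"
  shows "g ` {u..v} = {g u..g v}" and "g ` {u<..<v} = {g u<..<g v}"
    and "g ` {u..<v} = {g u..<g v}" and "g ` {u<..v} = {g u<..g v}"
proof -
  have lt: "\<And>x y. x\<in>{s..t} \<Longrightarrow> y\<in>{s..t} \<Longrightarrow> x<y \<Longrightarrow> g x < g y"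
    using sm by (simp add: strict_mono_onD)
  have le_iff: "\<And>x y. x\<in>{s..t} \<Longrightarrow> y\<in>{s..t} \<Longrightarrow> g x \<le> g y \<longleftrightarrow> x \<le> y"
    by (metis lt linorder_not_less order_le_less)
  have lt_iff: "\<And>x y. x\<in>{s..t} \<Longrightarrow> y\<in>{s..t} \<Longrightarrow> g x < g y \<longleftrightarrow> x < y"
    by (metis lt linorder_not_less order_le_less)
  have ivt: "\<And>y. g u \<le> y \<Longrightarrow> y \<le> g v \<Longrightarrow> \<exists>x. u \<le> x \<and> x \<le> v \<and> g x = y"
    by (rule IVT') (use uv in \<open>auto intro: continuous_on_subset[OF cont]\<close>)
  have dom: "\<And>x. u \<le> x \<Longrightarrow> x \<le> v \<Longrightarrow> x \<in> {s..t}" using uv by auto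
  have du: "u \<in> {s..t}" and dv: "v \<in> {s..t}" using uv by auto
  show "g ` {u..v} = {g u..g v}"
  proof
    show "g ` {u..v} \<subseteq> {g u..g v}" using le_iff dom du dv by auto
    show "{g u..g v} \<subseteq> g ` {u..v}"
    proof
      fix y assume "y \<in> {g u..g v}"
      then obtain x where "u \<le> x" "x \<le> v" "g x = y" using ivt[of y] by auto
      then show "y \<in> g ` {u..v}" by auto
    qed
  qed
  show "g ` {u<..<v} = {g u<..<g v}"
  proof
    show "g ` {u<..<v} \<subseteq> {g u<..<g v}" using lt_iff dom du dv by auto
    show "{g u<..<g v} \<subseteq> g ` {u<..<v}"
    proof
      fix y assume y: "y \<in> {g u<..<g v}"
      then obtain x where x: "u \<le> x" "x \<le> v" "g x = y" using ivt[of y] by auto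
      then have "x \<noteq> u" "x \<noteq> v" using y by auto
      with x show "y \<in> g ` {u<..<v}" by auto
    qed
  qed
  show "g ` {u..<v} = {g u..<g v}"
  proof
    show "g ` {u..<v} \<subseteq> {g u..<g v}" using lt_iff le_iff dom du dv by auto
    show "{g u..<g v} \<subseteq> g ` {u..<v}"
    proof
      fix y assume y: "y \<in> {g u..<g v}"
      then obtain x where x: "u \<le> x" "x \<le> v" "g x = y" using ivt[of y] by auto
      then have "x \<noteq> v" using y by auto
      with x show "y \<in> g ` {u..<v}" by auto
    qed
  qed
  show "g ` {u<..v} = {g u<..g v}"
  proof
    show "g ` {u<..v} \<subseteq> {g u<..g v}" using lt_iff le_iff dom du dv by auto
    show "{g u<..g v} \<subseteq> g ` {u<..v}"
    proof
      fix y assume y: "y \<in> {g u<..g v}"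
      then obtain x where x: "u \<le> x" "x \<le> v" "g x = y" using ivt[of y] by auto
      then have "x \<noteq> u" using y by auto
      with x show "y \<in> g ` {u<..v}" by auto
    qed
  qed
qed

lemma closure_UN_finite:
  fixes A :: "'i \<Rightarrow> 'a::topological_space set"
  assumes "finite I"
  shows "closure (\<Union>i\<in>I. A i) = (\<Union>i\<in>I. closure (A i))"
  using assms by (induction I rule: finite_induct) (auto simp: closure_Un)



locale pcm =
  fixes f f1 f2 :: "real \<Rightarrow> real" and c :: real
  assumes c: "0 < c" "c < 1"
    and f_maps: "\<forall>x\<in>{0..1}. f x \<in> {0..1}"
    and f1_ext: "continuous_on {0..c} f1" "\<forall>x\<in>{0..<c}. f1 x = f x"
    and f2_ext: "continuous_on {c..1} f2" "\<forall>x\<in>{c<..1}. f2 x = f x"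
    and f1_inc: "strict_mono_on {0..c} f1"
    and f2_inc: "strict_mono_on {c..1} f2"
    and order: "0 = f2 c" "f2 c < f2 1" "f2 1 < f1 0" "f1 0 < f1 c" "f1 c = 1"
    and hyp: "\<forall>k::nat. c \<notin> closure ((f ^^ k) ` {f 1<..<f 0})"
begin

definition H :: "nat \<Rightarrow> real set" where
  "H k = (f ^^ k) ` {f 1<..<f 0}"

lemma f0: "f 0 = f1 0" using f1_ext c by auto
lemma f1v: "f 1 = f2 1" using f2_ext c by auto

lemma img1: "0 \<le> u \<Longrightarrow> u \<le> v \<Longrightarrow> v \<le> c \<Longrightarrow> f1 ` {u..v} = {f1 u..f1 v}"
  "0 \<le> u \<Longrightarrow> u \<le> v \<Longrightarrow> v \<le> c \<Longrightarrow> f1 ` {u<..<v} = {f1 u<..<f1 v}"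
  "0 \<le> u \<Longrightarrow> u \<le> v \<Longrightarrow> v \<le> c \<Longrightarrow> f1 ` {u..<v} = {f1 u..<f1 v}"
  using cm_img[OF f1_ext(1) f1_inc] by auto

lemma img2: "c \<le> u \<Longrightarrow> u \<le> v \<Longrightarrow> v \<le> 1 \<Longrightarrow> f2 ` {u..v} = {f2 u..f2 v}"
  "c \<le> u \<Longrightarrow> u \<le> v \<Longrightarrow> v \<le> 1 \<Longrightarrow> f2 ` {u<..<v} = {f2 u<..<f2 v}"
  "c \<le> u \<Longrightarrow> u \<le> v \<Longrightarrow> v \<le> 1 \<Longrightarrow> f2 ` {u<..v} = {f2 u<..f2 v}"
  using cm_img[OF f2_ext(1) f2_inc] by auto

lemma fimg1: "S \<subseteq> {0..<c} \<Longrightarrow> f ` S = f1 ` S"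
  using f1_ext(2) by (auto simp: image_def) (metis subsetD)+

lemma fimg2: "S \<subseteq> {c<..1} \<Longrightarrow> f ` S = f2 ` S"
  using f2_ext(2) by (auto simp: image_def) (metis subsetD)+

lemma fX1: "f ` {0..<c} = {f 0..<1}"
  using fimg1[of "{0..<c}"] img1(3)[of 0 c] c order f0 by auto

lemma fX2: "f ` {c<..1} = {0<..f 1}"
  using fimg2[of "{c<..1}"] img2(3)[of c 1] c order f1v by auto

lemma f_range: "x \<in> {0..1} \<Longrightarrow> x \<noteq> c \<Longrightarrow> 0 < f x \<and> f x < 1"
proof -
  assume x: "x \<in> {0..1}" "x \<noteq> c"
  show ?thesis
  proof (cases "x < c")
    case True
    then have "f x \<in> {f 0..<1}" using fX1 x by auto
    then show ?thesis using order f0 by auto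
  next
    case False
    then have "f x \<in> {0<..f 1}" using fX2 x by auto
    then show ?thesis using order f0 f1v by auto
  qed
qed

lemma f_inj: "inj_on f ({0..1} - {c})"
proof (rule inj_onI)
  fix x y assume x: "x \<in> {0..1} - {c}" and y: "y \<in> {0..1} - {c}" and e: "f x = f y"
  have i1: "inj_on f1 {0..c}" using f1_inc by (rule strict_mono_on_imp_inj_on)
  have i2: "inj_on f2 {c..1}" using f2_inc by (rule strict_mono_on_imp_inj_on)
  have a1: "\<And>z. z \<in> {0..<c} \<Longrightarrow> f z \<in> {f 0..<1}" using fX1 by auto
  have a2: "\<And>z. z \<in> {c<..1} \<Longrightarrow> f z \<in> {0<..f 1}" using fX2 by auto
  have o: "f 1 < f 0" using order f0 f1v by auto
  show "x = y"
  proof (cases "x < c")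
    case True
    show ?thesis
    proof (cases "y < c")
      case True
      then show ?thesis using \<open>x < c\<close> x y e f1_ext(2) inj_onD[OF i1, of x y] by auto
    next
      case False
      then show ?thesis using \<open>x < c\<close> x y e a1[of x] a2[of y] o by auto
    qed
  next
    case False
    show ?thesis
    proof (cases "y < c")
      case True
      then show ?thesis using \<open>\<not> x < c\<close> x y e a1[of y] a2[of x] o by auto
    next
      case False
      then show ?thesis using \<open>\<not> x < c\<close> x y e f2_ext(2) inj_onD[OF i2, of x y] by auto
    qed
  qed
qed

lemma Hk: "H k = {(f^^Suc k) 1<..<(f^^Suc k) 0} \<and> 0 < (f^^Suc k) 1 \<and>
   (f^^Suc k) 1 < (f^^Suc k) 0 \<and> (f^^Suc k) 0 < 1 \<and> ((f^^Suc k) 0 < c \<or> c < (f^^Suc k) 1)"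
proof (induction k)
  case 0
  have "c \<notin> {f 1..f 0}" using hyp[rule_format, of 0] order f0 f1v by auto
  then show ?case using order f0 f1v by (auto simp: H_def)
next
  case (Suc k)
  define u where "u = (f^^Suc k) 1"
  define v where "v = (f^^Suc k) 0"
  have IH: "H k = {u<..<v}" "0 < u" "u < v" "v < 1" "v < c \<or> c < u"
    using Suc.IH by (auto simp: u_def v_def)
  have HS: "H (Suc k) = f ` H k" by (simp add: H_def image_comp)
  have eqs: "(f^^Suc (Suc k)) 1 = f u" "(f^^Suc (Suc k)) 0 = f v"
    by (simp_all add: u_def v_def)
  have main: "H (Suc k) = {f u<..<f v} \<and> f u < f v"
  proof (cases "v < c")
    case True
    have "f ` {u<..<v} = f1 ` {u<..<v}" using True IH by (intro fimg1) auto
    also have "\<dots> = {f1 u<..<f1 v}" using True IH by (intro img1) auto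
    finally show ?thesis using HS IH f1_ext(2) True strict_mono_onD[OF f1_inc, of u v] by auto
  next
    case False
    then have "c < u" using IH by auto
    have "f ` {u<..<v} = f2 ` {u<..<v}" using \<open>c < u\<close> IH by (intro fimg2) auto
    also have "\<dots> = {f2 u<..<f2 v}" using \<open>c < u\<close> IH by (intro img2) auto
    finally show ?thesis using HS IH f2_ext(2) \<open>c < u\<close> strict_mono_onD[OF f2_inc, of u v] by auto
  qed
  have r: "0 < f u" "f v < 1" using f_range[of u] f_range[of v] IH by auto
  have "c \<notin> closure (H (Suc k))" using hyp[rule_format, of "Suc k"] unfolding H_def by blast
  then have "c \<notin> {f u..f v}" using main by simp
  then show ?case using main r eqs by auto
qed

lemma orbit: "(f^^n) 0 \<in> {0..1} - {c} \<and> (f^^n) 1 \<in> {0..1} - {c}"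
proof (cases n)
  case 0 then show ?thesis using c by auto
next
  case (Suc k) then show ?thesis using Hk[of k] by auto
qed

end


context pcm
begin

lemma atomF_step: "\<exists>p' q'. atomF f c i {(f^^p) 0..(f^^q) 1} = {(f^^p') 0..(f^^q') 1}"
proof -
  define u where "u = (f^^p) 0"
  define v where "v = (f^^q) 1"
  have uu: "u \<in> {0..1} - {c}" "v \<in> {0..1} - {c}" using orbit u_def v_def by auto
  have o1: "(f^^1) 1 < (f^^1) 0" using Hk[of 0] by auto
  have emp: "atomF f c i {} = {(f^^1) 0..(f^^1) 1}" using o1 by (simp add: atomF_def)
  have su: "(f^^Suc p) 0 = f u" "(f^^Suc q) 1 = f v" by (simp_all add: u_def v_def)
  show ?thesis
  proof (cases "v < u")
    case True
    then have "{u..v} = {}" by auto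
    then show ?thesis using emp u_def v_def by metis
  next
    case False
    then have uv: "u \<le> v" by simp
    show ?thesis
    proof (cases "i = 1")
      case True
      then have pc: "piece c i = {0..<c}" by (simp add: piece_def)
      show ?thesis
      proof (cases "v < c")
        case vc: True
        have "{u..v} \<inter> {0..<c} = {u..v}" using vc uu by auto
        moreover have "f ` {u..v} = f1 ` {u..v}" using vc uu by (intro fimg1) auto
        moreover have "f1 ` {u..v} = {f1 u..f1 v}" using vc uu uv by (intro img1) auto
        moreover have "f1 u = f u" "f1 v = f v" using f1_ext(2) vc uu uv by auto
        ultimately have "atomF f c i {u..v} = {f u..f v}" by (simp add: atomF_def pc)
        then show ?thesis using su u_def v_def by metis
      next
        case vc: False
        show ?thesis
        proof (cases "u < c")
          case uc: True
          have "{u..v} \<inter> {0..<c} = {u..<c}" using vc uc uu by auto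
          moreover have "f ` {u..<c} = f1 ` {u..<c}" using uu by (intro fimg1) auto
          moreover have "f1 ` {u..<c} = {f1 u..<f1 c}" using uc uu by (intro img1) auto
          moreover have "f1 u = f u" using f1_ext(2) uc uu by auto
          moreover have "f u < 1" using f_range[of u] uu by auto
          ultimately have "atomF f c i {u..v} = {f u..1}" using order by (simp add: atomF_def pc)
          then have "atomF f c i {u..v} = {(f^^Suc p) 0..(f^^0) 1}" using su by simp
          then show ?thesis using u_def v_def by metis
        next
          case uc: False
          then have "{u..v} \<inter> {0..<c} = {}" by auto
          then have "atomF f c i {u..v} = atomF f c i {}" by (simp add: atomF_def pc)
          then show ?thesis using emp u_def v_def by metis
        qed
      qed
    next
      case False
      then have pc: "piece c i = {c<..1}" by (simp add: piece_def)
      show ?thesis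
      proof (cases "c < u")
        case uc: True
        have "{u..v} \<inter> {c<..1} = {u..v}" using uc uu by auto
        moreover have "f ` {u..v} = f2 ` {u..v}" using uc uu by (intro fimg2) auto
        moreover have "f2 ` {u..v} = {f2 u..f2 v}" using uc uu uv by (intro img2) auto
        moreover have "f2 u = f u" "f2 v = f v" using f2_ext(2) uc uu uv by auto
        ultimately have "atomF f c i {u..v} = {f u..f v}" by (simp add: atomF_def pc)
        then show ?thesis using su u_def v_def by metis
      next
        case uc: False
        show ?thesis
        proof (cases "c < v")
          case vc: True
          have "{u..v} \<inter> {c<..1} = {c<..v}" using vc uc uu by auto
          moreover have "f ` {c<..v} = f2 ` {c<..v}" using uu by (intro fimg2) auto
          moreover have "f2 ` {c<..v} = {f2 c<..f2 v}" using vc uu by (intro img2) auto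
          moreover have "f2 v = f v" using f2_ext(2) vc uu by auto
          moreover have "0 < f v" using f_range[of v] uu by auto
          ultimately have "atomF f c i {u..v} = {0..f v}" using order by (simp add: atomF_def pc)
          then have "atomF f c i {u..v} = {(f^^0) 0..(f^^Suc q) 1}" using su by simp
          then show ?thesis using u_def v_def by metis
        next
          case vc: False
          then have "{u..v} \<inter> {c<..1} = {}" by auto
          then have "atomF f c i {u..v} = atomF f c i {}" by (simp add: atomF_def pc)
          then show ?thesis using emp u_def v_def by metis
        qed
      qed
    qed
  qed
qed

lemma atom_form: "\<exists>p q. atom_word f c ws = {(f^^p) 0..(f^^q) 1}"
proof (induction ws rule: rev_induct)
  case Nil
  have "atom_word f c [] = {(f^^0) 0..(f^^0) 1}" by (simp add: atom_word_def)
  then show ?case by metis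
next
  case (snoc i ws)
  then obtain p q where pq: "atom_word f c ws = {(f^^p) 0..(f^^q) 1}" by blast
  have "atom_word f c (ws @ [i]) = atomF f c i (atom_word f c ws)"
    by (simp add: atom_word_def)
  then show ?case using pq atomF_step by metis
qed

end


context pcm
begin

definition WW :: "nat \<Rightarrow> nat list set" where
  "WW n = {ws. length ws = n \<and> set ws \<subseteq> {1,2}}"

definition LL :: "nat \<Rightarrow> real set" where
  "LL n = (\<Union>ws\<in>WW n. atom_word f c ws)"

lemma Lambda_LL: "Lambda f c n = LL n"
  unfolding Lambda_def atoms_def LL_def WW_def by blast

lemma WW_fin: "finite (WW n)"
proof -
  have "WW n = {xs. set xs \<subseteq> {1,2} \<and> length xs = n}" by (auto simp: WW_def)
  then show ?thesis using finite_lists_length_eq[of "{1::nat,2}" n] by simp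
qed

lemma LL0: "LL 0 = {0..1}"
  by (simp add: LL_def WW_def atom_word_def)

lemma atomF_UN: "finite I \<Longrightarrow> atomF f c i (\<Union>j\<in>I. A j) = (\<Union>j\<in>I. atomF f c i (A j))"
proof -
  assume fin: "finite I"
  have eq: "(\<Union>j\<in>I. A j) \<inter> piece c i = (\<Union>j\<in>I. A j \<inter> piece c i)" by blast
  show ?thesis unfolding atomF_def eq image_UN by (rule closure_UN_finite[OF fin])
qed

lemma LL_Suc: "LL (Suc n) = atomF f c 1 (LL n) \<union> atomF f c 2 (LL n)"
proof -
  have "LL (Suc n) = (\<Union>ws\<in>WW n. atomF f c 1 (atom_word f c ws) \<union> atomF f c 2 (atom_word f c ws))"
  proof
    show "LL (Suc n) \<subseteq> (\<Union>ws\<in>WW n. atomF f c 1 (atom_word f c ws) \<union> atomF f c 2 (atom_word f c ws))"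
    proof
      fix x assume "x \<in> LL (Suc n)"
      then obtain ws where ws: "ws \<in> WW (Suc n)" "x \<in> atom_word f c ws" by (auto simp: LL_def)
      then have "length ws = Suc n" by (simp add: WW_def)
      then obtain vs i where vs: "ws = vs @ [i]" by (auto simp: length_Suc_conv_rev)
      have vw: "vs \<in> WW n" "i \<in> {1,2}" using ws(1) vs by (auto simp: WW_def)
      have "x \<in> atomF f c i (atom_word f c vs)" using ws(2) vs by (simp add: atom_word_def)
      then show "x \<in> (\<Union>ws\<in>WW n. atomF f c 1 (atom_word f c ws) \<union> atomF f c 2 (atom_word f c ws))"
        using vw by blast
    qed
    show "(\<Union>ws\<in>WW n. atomF f c 1 (atom_word f c ws) \<union> atomF f c 2 (atom_word f c ws)) \<subseteq> LL (Suc n)"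
    proof
      fix x assume "x \<in> (\<Union>ws\<in>WW n. atomF f c 1 (atom_word f c ws) \<union> atomF f c 2 (atom_word f c ws))"
      then obtain vs i where vw: "vs \<in> WW n" "i \<in> {1,2}" "x \<in> atomF f c i (atom_word f c vs)" by blast
      then have "x \<in> atom_word f c (vs @ [i])" by (simp add: atom_word_def)
      moreover have "vs @ [i] \<in> WW (Suc n)" using vw by (auto simp: WW_def)
      ultimately show "x \<in> LL (Suc n)" by (auto simp: LL_def)
    qed
  qed
  also have "\<dots> = atomF f c 1 (LL n) \<union> atomF f c 2 (LL n)"
  proof -
    have "atomF f c 1 (LL n) = (\<Union>ws\<in>WW n. atomF f c 1 (atom_word f c ws))"
      unfolding LL_def by (rule atomF_UN[OF WW_fin])
    moreover have "atomF f c 2 (LL n) = (\<Union>ws\<in>WW n. atomF f c 2 (atom_word f c ws))"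
      unfolding LL_def by (rule atomF_UN[OF WW_fin])
    ultimately show ?thesis by (simp add: UN_Un_distrib)
  qed
  finally show ?thesis .
qed

definition U :: "nat \<Rightarrow> real set" where
  "U n = (\<Union>k<n. H k)"

lemma H_sub: "H k \<subseteq> {0..1} - {c}" "open (H k)" "H k \<inter> {..(f^^Suc k) 1} = {}" "H k \<inter> {(f^^Suc k) 0..} = {}"
  using Hk[of k] by auto

lemma U_sub: "U n \<subseteq> {0..1} - {c}" using H_sub by (auto simp: U_def)

lemma fH: "f ` H k = H (Suc k)" by (simp add: H_def image_comp)

lemma d_ex: "\<exists>d>0. \<forall>k<n. d \<le> (f^^Suc (Suc k)) 1 \<and> (f^^Suc (Suc k)) 0 \<le> 1 - d"
proof (induction n)
  case 0 show ?case by (rule exI[of _ 1]) auto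
next
  case (Suc n)
  then obtain d where d: "d > 0" "\<forall>k<n. d \<le> (f^^Suc (Suc k)) 1 \<and> (f^^Suc (Suc k)) 0 \<le> 1 - d" by blast
  define a where "a = (f^^Suc (Suc n)) 1"
  define b where "b = (f^^Suc (Suc n)) 0"
  have ab: "0 < a" "a < b" "b < 1" using Hk[of "Suc n"] a_def b_def by auto
  define d' where "d' = min d (min a (1 - b))"
  have "d' > 0" using d ab by (simp add: d'_def)
  moreover have "\<forall>k<Suc n. d' \<le> (f^^Suc (Suc k)) 1 \<and> (f^^Suc (Suc k)) 0 \<le> 1 - d'"
  proof (intro allI impI)
    fix k assume "k < Suc n"
    then consider "k < n" | "k = n" by linarith
    then show "d' \<le> (f^^Suc (Suc k)) 1 \<and> (f^^Suc (Suc k)) 0 \<le> 1 - d'"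
    proof cases
      case 1 then show ?thesis using d(2) by (auto simp: d'_def)
    next
      case 2 then show ?thesis using a_def b_def by (auto simp: d'_def)
    qed
  qed
  ultimately show ?case by blast
qed

lemma key: "closure (({0<..f 1} \<union> {f 0..<1}) - (\<Union>k<n. H (Suc k))) = {0..1} - U (Suc n)"
proof -
  define V where "V = (\<Union>k<n. H (Suc k))"
  define W where "W = {0<..f 1} \<union> {f 0..<1}"
  have o: "0 < f 1" "f 1 < f 0" "f 0 < 1" using order f0 f1v by auto
  have US: "U (Suc n) = H 0 \<union> V"
    unfolding U_def V_def lessThan_Suc_eq_insert_0 by auto
  have H0: "H 0 = {f 1<..<f 0}" by (simp add: H_def)
  have Vo: "open V" unfolding V_def using H_sub(2) by blast
  obtain d where d: "d > 0" "\<forall>k<n. d \<le> (f^^Suc (Suc k)) 1 \<and> (f^^Suc (Suc k)) 0 \<le> 1 - d"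
    using d_ex by blast
  have Vd: "\<And>y. y \<in> V \<Longrightarrow> d < y \<and> y < 1 - d"
  proof -
    fix y assume "y \<in> V"
    then obtain k where "k < n" "y \<in> H (Suc k)" by (auto simp: V_def)
    then show "d < y \<and> y < 1 - d" using Hk[of "Suc k"] d(2) by force
  qed
  show ?thesis unfolding V_def[symmetric] W_def[symmetric] US H0
  proof
    have "closure (W - V) \<subseteq> closure W" by (rule closure_mono) auto
    also have "\<dots> \<subseteq> {0..f 1} \<union> {f 0..1}"
      by (rule closure_minimal) (auto simp: W_def)
    finally have a: "closure (W - V) \<subseteq> {0..f 1} \<union> {f 0..1}" .
    have b: "V \<inter> closure (W - V) = {}" using open_Int_closure_eq_empty[OF Vo] by auto
    show "closure (W - V) \<subseteq> {0..1} - ({f 1<..<f 0} \<union> V)"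
    proof
      fix x assume x: "x \<in> closure (W - V)"
      then have "x \<in> {0..f 1} \<union> {f 0..1}" "x \<notin> V" using a b by blast+
      then show "x \<in> {0..1} - ({f 1<..<f 0} \<union> V)" using o by auto
    qed
  next
    show "{0..1} - ({f 1<..<f 0} \<union> V) \<subseteq> closure (W - V)"
    proof
      fix x assume x: "x \<in> {0..1} - ({f 1<..<f 0} \<union> V)"
      have xx: "x \<in> {0..f 1} \<union> {f 0..1}" "x \<notin> V" using x o by auto
      have "x = 0 \<or> x = 1 \<or> x \<in> W - V"
      proof (cases "x = 0 \<or> x = 1")
        case False
        then have "x \<noteq> 0" "x \<noteq> 1" by auto
        then have "x \<in> W" using xx(1) unfolding W_def by auto
        then show ?thesis using xx(2) by blast
      qed blast
      then consider "x = 0" | "x = 1" | "x \<in> W - V" by blast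
      then show "x \<in> closure (W - V)"
      proof cases
        case 1
        define e where "e = min d (f 1)"
        have e: "0 < e" using d o by (simp add: e_def)
        have "{0<..e} \<subseteq> W - V"
        proof
          fix y assume y: "y \<in> {0<..e}"
          then have "y \<le> d" "y \<le> f 1" "0 < y" by (auto simp: e_def)
          then show "y \<in> W - V" using Vd[of y] by (auto simp: W_def)
        qed
        then have "closure {0<..e} \<subseteq> closure (W - V)" by (rule closure_mono)
        then show ?thesis using e 1 by auto
      next
        case 2
        define e where "e = min d (1 - f 0)"
        have e: "0 < e" using d o by (simp add: e_def)
        have "{1 - e..<1} \<subseteq> W - V"
        proof
          fix y assume y: "y \<in> {1 - e..<1}"
          then have "1 - d \<le> y" "f 0 \<le> y" "y < 1" by (auto simp: e_def)
          then show "y \<in> W - V" using Vd[of y] by (auto simp: W_def)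
        qed
        then have "closure {1-e..<1} \<subseteq> closure (W - V)" by (rule closure_mono)
        then show ?thesis using e 2 by auto
      next
        case 3 then show ?thesis using closure_subset by blast
      qed
    qed
  qed
qed

lemma LL_U: "LL n = {0..1} - U n"
proof (induction n)
  case 0 then show ?case by (simp add: LL0 U_def)
next
  case (Suc n)
  define S where "S = {0..1} - U n"
  have "LL (Suc n) = closure (f ` (S \<inter> {0..<c})) \<union> closure (f ` (S \<inter> {c<..1}))"
    using Suc.IH by (simp add: LL_Suc atomF_def piece_def S_def)
  also have "\<dots> = closure (f ` (S \<inter> {0..<c}) \<union> f ` (S \<inter> {c<..1}))" by (simp add: closure_Un)
  also have "f ` (S \<inter> {0..<c}) \<union> f ` (S \<inter> {c<..1}) = f ` ({0..1} - {c} - U n)"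
  proof -
    have "(S \<inter> {0..<c}) \<union> (S \<inter> {c<..1}) = {0..1} - {c} - U n" using c by (auto simp: S_def)
    then show ?thesis by (metis image_Un)
  qed
  also have "f ` ({0..1} - {c} - U n) = f ` ({0..1} - {c}) - f ` U n"
    by (rule inj_on_image_set_diff[OF f_inj]) (use U_sub in auto)
  also have "f ` ({0..1} - {c}) = {0<..f 1} \<union> {f 0..<1}"
  proof -
    have "{0..1} - {c} = {0..<c} \<union> {c<..1}" using c by auto
    then show ?thesis using fX1 fX2 by (metis image_Un sup_commute)
  qed
  also have "f ` U n = (\<Union>k<n. H (Suc k))" by (simp add: U_def image_UN fH)
  finally show ?case using key by simp
qed

end

theorem lemma7:
  fixes f f1 f2 :: "real \<Rightarrow> real" and c :: real
  assumes c: "0 < c" "c < 1"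
    and f_maps: "\<forall>x\<in>{0..1}. f x \<in> {0..1}"
    and f_discont: "\<not> continuous (at c within {0..1}) f"
    and contr: "\<exists>L::real. 0 < L \<and> L < 1 \<and>
        (\<forall>x\<in>{0..<c}. \<forall>y\<in>{0..<c}. \<bar>f x - f y\<bar> \<le> L * \<bar>x - y\<bar>) \<and>
        (\<forall>x\<in>{c<..1}. \<forall>y\<in>{c<..1}. \<bar>f x - f y\<bar> \<le> L * \<bar>x - y\<bar>)"
    and f1_ext: "continuous_on {0..c} f1" "\<forall>x\<in>{0..<c}. f1 x = f x"
      "\<forall>x\<in>{0..c}. f1 x \<in> {0..1}"
    and f2_ext: "continuous_on {c..1} f2" "\<forall>x\<in>{c<..1}. f2 x = f x"
      "\<forall>x\<in>{c..1}. f2 x \<in> {0..1}"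
    and f1_inc: "strict_mono_on {0..c} f1"
    and f2_inc: "strict_mono_on {c..1} f2"
    and order: "0 = f2 c" "f2 c < f2 1" "f2 1 < f1 0" "f1 0 < f1 c" "f1 c = 1"
    and hyp: "\<forall>k::nat. c \<notin> closure ((f ^^ k) ` {f 1<..<f 0})"
  shows "(\<forall>k::nat. (f ^^ k) ` {f 1<..<f 0} = {(f ^^ Suc k) 1<..<(f ^^ Suc k) 0})
       \<and> (\<forall>n\<ge>1. Lambda f c n = {0..1} - (\<Union>k<n. (f ^^ k) ` {f 1<..<f 0}))
       \<and> {0, 1} \<subseteq> Xtilde f c
       \<and> (\<forall>n\<ge>1. \<forall>A\<in>atoms f c n. \<exists>p q. A = {(f ^^ p) 0..(f ^^ q) 1})"
proof -
  interpret P: pcm f f1 f2 c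
    unfolding pcm_def using c f_maps f1_ext f2_ext f1_inc f2_inc order hyp by blast
  have A: "\<forall>k::nat. (f ^^ k) ` {f 1<..<f 0} = {(f ^^ Suc k) 1<..<(f ^^ Suc k) 0}"
    using P.Hk unfolding P.H_def by blast
  have B: "\<forall>n\<ge>1. Lambda f c n = {0..1} - (\<Union>k<n. (f ^^ k) ` {f 1<..<f 0})"
    using P.Lambda_LL P.LL_U unfolding P.U_def P.H_def by simp
  have C: "{0, 1} \<subseteq> Xtilde f c"
    unfolding Xtilde_def using P.orbit by auto
  have D: "\<forall>n\<ge>1. \<forall>A\<in>atoms f c n. \<exists>p q. A = {(f ^^ p) 0..(f ^^ q) 1}"
    unfolding atoms_def using P.atom_form by blast
  show ?thesis using A B C D by blast
qed

end
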